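(* Let $1\le a\le\sqrt3$ and $c(a)=\frac98(a+\frac1a)$. For $K>c(a)^2/9$ let $C_{K}$ be the closed curve $\{M\in\mathbb{R}^3: aM_1^2+\frac1aM_2^2-3M_3-c(a)=0,\ M_1^2+M_2^2+M_3^2=K\}$, let $M(t)=(M_1(t),M_2(t),M_3(t))$ be a periodic solution of $$\dot M_1=-\tfrac1aM_2M_3-\tfrac32M_2,\quad \dot M_2=aM_1M_3+\tfrac32M_1,\quad \dot M_3=\left(\tfrac1a-a\right)M_1M_2$$ traversing $C_K$, with period $T(K,a)$, let $D(K,a)$ be the part of the sphere $M_1^2+M_2^2+M_3^2=K$ below $C_K$ (the component of the sphere minus $C_K$ containing $(0,0,-\sqrt K)$), and define the Berry phase $$\Delta\theta(K,a)=\frac1{\sqrt K}\int_0^{T(K,a)}\left(\tfrac32M_3(t)+c(a)\right)dt+\mathrm{Area}(D(K,a)).$$ Then $$\lim_{K\to c(a)^2/9+0}\Delta\theta(K,a)=\frac{8a\pi}{\sqrt{3-a^2}\sqrt{3a^2-1}},$$ where for $a=\sqrt3$ the right-hand side is read as $+\infty$.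
   Context: For $1\le a\le\sqrt3$ and $K>c(a)^2/9$, the intersection $C_K$ of the paraboloid and the sphere is a single closed curve surrounding the $M_3$-axis, and every solution of the stated system starting on $C_K$ is periodic and traverses $C_K$; $T(K,a)$ denotes its period. This system is the Lie–Poisson equation (with $M_4=1$) for the Fefferman metric of $\mathrm{SU}(2)$ with left-invariant CR structure $\mathbb{C}(e_1-\frac ia e_2)$, and $\Delta\theta$ is the Berry phase of the corresponding chain. Area is the standard surface area in $\mathbb{R}^3$. *)

theory Defs
  imports "HOL-Analysis.Analysis"
begin

definition cA :: "real \<Rightarrow> real" where
  "cA a = 9/8 * (a + 1/a)"

definition curveC :: "real \<Rightarrow> real \<Rightarrow> (real^3) set" where
  "curveC a K = {M. a * (M$1)^2 + (1/a) * (M$2)^2 - 3 * (M$3) - cA a = 0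
                  \<and> (M$1)^2 + (M$2)^2 + (M$3)^2 = K}"

definition fieldF :: "real \<Rightarrow> real^3 \<Rightarrow> real^3" where
  "fieldF a M = vector [ -(1/a) * M$2 * M$3 - 3/2 * M$2,
                          a * M$1 * M$3 + 3/2 * M$1,
                          (1/a - a) * M$1 * M$2 ]"

definition periodic_sol_on :: "real \<Rightarrow> real \<Rightarrow> (real \<Rightarrow> real^3) \<Rightarrow> real \<Rightarrow> bool" where
  "periodic_sol_on a K M T \<longleftrightarrow>
     (\<forall>t. (M has_vector_derivative fieldF a (M t)) (at t)) \<and>
     M 0 \<in> curveC a K \<and> 0 < T \<and> M T = M 0 \<and> (\<forall>s\<in>{0<..<T}. M s \<noteq> M 0)"

definition regionD :: "real \<Rightarrow> real \<Rightarrow> (real^3) set" where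
  "regionD a K = connected_component_set (sphere 0 (sqrt K) - curveC a K)
                    (vector [0, 0, - sqrt K])"

text \<open>Standard surface area of a subset S of the sphere of radius R, computed via
  the spherical-coordinate parametrisation r(th,ph) = R(sin ph cos th, sin ph sin th, cos ph),
  whose area element is |r_th x r_ph| = R^2 sin ph.\<close>
definition sphere_param :: "real \<Rightarrow> real \<times> real \<Rightarrow> real^3" where
  "sphere_param R p = vector [R * sin (snd p) * cos (fst p),
                              R * sin (snd p) * sin (fst p),
                              R * cos (snd p)]"

definition sphere_area :: "real \<Rightarrow> (real^3) set \<Rightarrow> real" where
  "sphere_area R S = integral ({0..2*pi} \<times> {0..pi})
      (\<lambda>p. indicator S (sphere_param R p) * R^2 * sin (snd p))"

definition berry_phase :: "real \<Rightarrow> real \<Rightarrow> (real \<Rightarrow> real^3) \<Rightarrow> real \<Rightarrow> real" where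
  "berry_phase a K M T =
     1 / sqrt K * integral {0..T} (\<lambda>t. 3/2 * (M t)$3 + cA a)
     + sphere_area (sqrt K) (regionD a K)"

end

theory Submission imports Defs begin

lemma cA_pos: "1 \<le> a \<Longrightarrow> cA a > 0"
  unfolding cA_def by (simp add: add_pos_pos)

lemma a_c_le: assumes "1 \<le> a" "a \<le> sqrt 3" shows "a * cA a \<le> 9/2"
proof -
  have "a^2 \<le> (sqrt 3)^2" using assms by (intro power_mono) auto
  hence "a^2 \<le> 3" by simp
  moreover have "a * cA a = 9/8 * (a^2 + 1)" using assms unfolding cA_def by (simp add: field_simps power2_eq_square)
  ultimately show ?thesis by simp
qed

definition yp :: "real \<Rightarrow> real \<Rightarrow> real" where
  "yp a K = (-3 + sqrt (9 + 4*a*(a*K - cA a))) / (2*a)"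

lemma below_yp:
  fixes u v w K a :: real
  assumes "1 \<le> a" "u^2+v^2+w^2 = K" "a*u^2 + (1/a) * v^2 - 3*w - cA a \<ge> 0"
  shows "w \<le> yp a K"
proof -
  have "(1/a) * v^2 \<le> a * v^2" using assms(1)
    by (intro mult_right_mono) (use mult_mono[of 1 a 1 a] in \<open>auto simp: field_simps\<close>)
  moreover have "a*K = a*u^2 + a* v^2 + a*w^2" by (simp add: assms(2)[symmetric] algebra_simps)
  ultimately have "3*w + cA a \<le> a*(K - w^2)" using assms(3) by (simp add: algebra_simps)
  hence "4*a*(3*w + cA a) \<le> 4*a*(a*(K - w^2))" using assms(1) by (intro mult_left_mono) auto
  moreover have "(2*a*w+3)^2 = 4*a*(3*w) + 4*a*(a*w^2) + 9" by (simp add: power2_eq_square algebra_simps)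
  moreover have "4*a*(a*(K - w^2)) = 4*a*(a*K) - 4*a*(a*w^2)" by (simp add: algebra_simps)
  moreover have "4*a*(3*w + cA a) = 4*a*(3*w) + 4*a*cA a" by (simp add: algebra_simps)
  moreover have "4*a*(a*K - cA a) = 4*a*(a*K) - 4*a*cA a" by (simp add: algebra_simps)
  ultimately have "(2*a*w+3)^2 \<le> 9 + 4*a*(a*K - cA a)" by linarith
  hence "2*a*w+3 \<le> sqrt (9 + 4*a*(a*K - cA a))" by (rule real_le_rsqrt)
  hence "2*a*w \<le> -3 + sqrt (9 + 4*a*(a*K - cA a))" by simp
  moreover have "w*(2*a) = 2*a*w" by simp
  ultimately have "w*(2*a) \<le> -3 + sqrt (9 + 4*a*(a*K - cA a))" by linarith
  moreover have "0 < 2*a" using assms(1) by simp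
  ultimately show ?thesis unfolding yp_def by (rule pos_le_divide_eq[THEN iffD2, rotated])
qed

lemma norm3: "norm (x::real^3) = sqrt (x$1^2 + x$2^2 + x$3^2)"
  by (simp add: norm_vec_def L2_set_def sum_3)

lemma fieldF_comp:
  "fieldF a M $ 1 = -(1/a) * M$2 * M$3 - 3/2 * M$2"
  "fieldF a M $ 2 = a * M$1 * M$3 + 3/2 * M$1"
  "fieldF a M $ 3 = (1/a - a) * M$1 * M$2"
  by (simp_all add: fieldF_def)

lemma comp_deriv:
  assumes "\<forall>t. (m has_vector_derivative fieldF a (m t)) (at t)"
  shows "((\<lambda>t. m t $ i) has_real_derivative (fieldF a (m t) $ i)) (at t)"
  using bounded_linear.has_vector_derivative[OF bounded_linear_vec_nth assms[rule_format, of t], of i]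
  by (simp add: has_real_derivative_iff_has_vector_derivative)

lemma comp_deriv':
  assumes "\<forall>t. (m has_vector_derivative fieldF a (m t)) (at t)"
  shows "((\<lambda>t. m t $ 1) has_real_derivative (-(1/a) * m t$2 * m t$3 - 3/2 * m t$2)) (at t)"
    "((\<lambda>t. m t $ 2) has_real_derivative (a * m t$1 * m t$3 + 3/2 * m t$1)) (at t)"
    "((\<lambda>t. m t $ 3) has_real_derivative ((1/a - a) * m t$1 * m t$2)) (at t)"
  using comp_deriv[OF assms, of 1 t] comp_deriv[OF assms, of 2 t] comp_deriv[OF assms, of 3 t]
  by (simp_all add: fieldF_comp)

lemma const_of_deriv0:
  assumes "\<And>t. (f has_real_derivative 0) (at t)"
  shows "f t = f 0"
proof -
  obtain k where "\<forall>x\<in>UNIV. f x = k"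
    using has_field_derivative_zero_constant[of UNIV f] assms by auto
  thus ?thesis by simp
qed

lemma on_curve:
  assumes "periodic_sol_on a K m T" "1 \<le> a"
  shows "m t \<in> curveC a K"
proof -
  have dv: "\<forall>t. (m has_vector_derivative fieldF a (m t)) (at t)" using assms unfolding periodic_sol_on_def by blast
  note d = comp_deriv'[OF dv]
  have "((\<lambda>t. (m t$1)^2 + (m t$2)^2 + (m t$3)^2) has_real_derivative 0) (at t)" for t
    by (rule derivative_eq_intros d refl)+ (simp add: field_simps)
  hence S: "(m t$1)^2 + (m t$2)^2 + (m t$3)^2 = (m 0$1)^2 + (m 0$2)^2 + (m 0$3)^2"
    by (rule const_of_deriv0)
  have "((\<lambda>t. a * (m t$1)^2 + (1/a) * (m t$2)^2 - 3 * (m t$3) - cA a) has_real_derivative 0) (at t)" for t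
    by (rule derivative_eq_intros d refl)+ (use assms(2) in \<open>simp add: field_simps\<close>)
  hence P: "a * (m t$1)^2 + (1/a) * (m t$2)^2 - 3 * (m t$3) - cA a = a * (m 0$1)^2 + (1/a) * (m 0$2)^2 - 3 * (m 0$3) - cA a"
    by (rule const_of_deriv0)
  have "m 0 \<in> curveC a K" using assms unfolding periodic_sol_on_def by blast
  thus ?thesis using S P unfolding curveC_def by simp
qed

lemma angle_lift:
  fixes X Y X' Y' W :: "real \<Rightarrow> real" and t :: real
  assumes dX: "\<And>t. (X has_real_derivative X' t) (at t)"
    and dY: "\<And>t. (Y has_real_derivative Y' t) (at t)"
    and cX': "continuous_on UNIV X'" and cY': "continuous_on UNIV Y'"
    and nz: "\<And>t. X t ^ 2 + Y t ^ 2 > 0"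
    and W_def: "W = (\<lambda>s. (X s * Y' s - Y s * X' s) / (X s ^ 2 + Y s ^ 2))"
    and t: "0 \<le> t"
  shows "(X t * cos (integral {0..t} W) + Y t * sin (integral {0..t} W)) * Y 0
          - (Y t * cos (integral {0..t} W) - X t * sin (integral {0..t} W)) * X 0 = 0"
    and "(X t * cos (integral {0..t} W) + Y t * sin (integral {0..t} W)) * X 0
          + (Y t * cos (integral {0..t} W) - X t * sin (integral {0..t} W)) * Y 0
         = sqrt (X t ^ 2 + Y t ^ 2) * sqrt (X 0 ^ 2 + Y 0 ^ 2)"
    and "continuous_on UNIV W"
proof -
  define S where "S = {0..t}"
  define Th where "Th = (\<lambda>s. integral {0..s} W)"
  define R where "R = (\<lambda>s. X s ^ 2 + Y s ^ 2)"
  define sg where "sg = (\<lambda>s. (X s * X' s + Y s * Y' s) / R s)"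
  define p where "p = (\<lambda>s. X s * cos (Th s) + Y s * sin (Th s))"
  define q where "q = (\<lambda>s. Y s * cos (Th s) - X s * sin (Th s))"
  have Rpos: "R s > 0" for s using nz unfolding R_def by auto
  have cX: "continuous_on UNIV X" using dX by (intro continuous_at_imp_continuous_on) (auto intro: DERIV_isCont)
  have cY: "continuous_on UNIV Y" using dY by (intro continuous_at_imp_continuous_on) (auto intro: DERIV_isCont)
  have cW: "continuous_on UNIV W" unfolding W_def
    using nz by (intro continuous_intros cX cY cX' cY') (metis less_irrefl)
  show "continuous_on UNIV W" by (rule cW)
  have dTh: "(Th has_real_derivative W s) (at s within S)" if "s \<in> S" for s
    unfolding Th_def S_def using that
    by (intro integral_has_real_derivative continuous_on_subset[OF cW]) (auto simp: S_def)
  have dXw: "(X has_real_derivative X' s) (at s within S)" for s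
    using dX has_field_derivative_at_within by blast
  have dYw: "(Y has_real_derivative Y' s) (at s within S)" for s
    using dY has_field_derivative_at_within by blast
  have dp: "(p has_real_derivative sg s * p s) (at s within S)" if "s \<in> S" for s
    unfolding p_def
    apply (rule derivative_eq_intros dXw dYw dTh[OF that] refl)+
    using Rpos[of s] unfolding W_def sg_def R_def power2_eq_square
    apply (subgoal_tac "X s * X s + Y s * Y s \<noteq> 0")
     apply (simp add: divide_simps)
     apply (simp add: algebra_simps)
    by linarith
  have dq: "(q has_real_derivative sg s * q s) (at s within S)" if "s \<in> S" for s
    unfolding q_def
    apply (rule derivative_eq_intros dXw dYw dTh[OF that] refl)+
    using Rpos[of s] unfolding W_def sg_def R_def power2_eq_square
    apply (subgoal_tac "X s * X s + Y s * Y s \<noteq> 0")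
     apply (simp add: divide_simps)
     apply (simp add: algebra_simps)
    by linarith
  have dr: "((\<lambda>s. sqrt (R s)) has_real_derivative sg s * sqrt (R s)) (at s within S)" for s
  proof -
    have dR: "(R has_real_derivative (2 * X s * X' s + 2 * Y s * Y' s)) (at s within S)"
      unfolding R_def by (rule derivative_eq_intros dXw dYw refl)+ simp
    have "((\<lambda>s. sqrt (R s)) has_real_derivative (inverse (sqrt (R s)) / 2) * (2 * X s * X' s + 2 * Y s * Y' s)) (at s within S)"
      by (rule DERIV_chain2[OF DERIV_real_sqrt[OF Rpos] dR])
    moreover have "(inverse (sqrt (R s)) / 2) * (2 * X s * X' s + 2 * Y s * Y' s) = sg s * sqrt (R s)"
    proof -
      have e: "sqrt (R s) * sqrt (R s) = R s" using Rpos[of s] by simp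
      have "sqrt (R s) > 0" using Rpos[of s] by simp
      then show ?thesis unfolding sg_def using Rpos[of s]
        by (simp add: field_simps) (metis e mult.assoc mult.commute)
    qed
    ultimately show ?thesis by simp
  qed
  define r where "r = (\<lambda>s. sqrt (R s))"
  have dr': "(r has_real_derivative sg s * r s) (at s within S)" for s
    unfolding r_def by (rule dr)
  have rpos: "r s > 0" for s using Rpos[of s] unfolding r_def by simp
  have convS: "convex S" unfolding S_def by (rule convex_real_interval)
  have inS: "0 \<in> S" "t \<in> S" using t unfolding S_def by auto
  have Th0: "Th 0 = 0" unfolding Th_def by simp
  have "((\<lambda>s. (p s * Y 0 - q s * X 0) / r s) has_real_derivative 0) (at s within S)" if "s \<in> S" for s
    apply (rule derivative_eq_intros dp[OF that] dq[OF that] dr' refl)+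
    using rpos[of s] by (auto simp: algebra_simps)
  then obtain k1 where k1: "\<forall>s\<in>S. (p s * Y 0 - q s * X 0) / r s = k1"
    using has_field_derivative_zero_constant[OF convS] by blast
  have "k1 = 0" using k1 inS(1) Th0 unfolding p_def q_def by (auto simp: algebra_simps)
  hence "(p t * Y 0 - q t * X 0) / r t = 0" using k1 inS(2) by auto
  thus "p t * Y 0 - q t * X 0 = 0" using rpos[of t] by simp
  have "((\<lambda>s. (p s * X 0 + q s * Y 0) / r s) has_real_derivative 0) (at s within S)" if "s \<in> S" for s
    apply (rule derivative_eq_intros dp[OF that] dq[OF that] dr' refl)+
    using rpos[of s] by (auto simp: algebra_simps)
  then obtain k2 where k2: "\<forall>s\<in>S. (p s * X 0 + q s * Y 0) / r s = k2"
    using has_field_derivative_zero_constant[OF convS] by blast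
  have "k2 = (X 0 * X 0 + Y 0 * Y 0) / r 0" using k2 inS(1) Th0 unfolding p_def q_def by auto
  also have "\<dots> = r 0"
  proof -
    have "r 0 * r 0 = X 0 * X 0 + Y 0 * Y 0" unfolding r_def R_def power2_eq_square
      using Rpos[of 0] unfolding R_def by (simp add: power2_eq_square)
    thus ?thesis using rpos[of 0] by (simp add: field_simps)
  qed
  finally have "(p t * X 0 + q t * Y 0) / r t = r 0" using k2 inS(2) by auto
  thus "p t * X 0 + q t * Y 0 = sqrt (R t) * sqrt (R 0)" using rpos[of t] unfolding r_def by (simp add: field_simps)
qed

lemma curve_eqs:
  assumes "M \<in> curveC a K" "1 \<le> a"
  shows "M$3 = (a * (M$1)^2 + (1/a) * (M$2)^2 - cA a) / 3"
    and "(M$1)^2 + (M$2)^2 + (M$3)^2 = K"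
  using assms unfolding curveC_def by auto

lemma curve_w_ge: assumes "M \<in> curveC a K" "1 \<le> a" shows "M$3 \<ge> - cA a / 3"
proof -
  have "a * (M$1)^2 + (1/a) * (M$2)^2 \<ge> 0" using assms(2) by auto
  thus ?thesis unfolding curve_eqs(1)[OF assms] by (simp add: field_simps)
qed

lemma curve_w_le: assumes "M \<in> curveC a K" "1 \<le> a" shows "M$3 \<le> yp a K"
  using below_yp[OF assms(2) curve_eqs(2)[OF assms]] assms(1) unfolding curveC_def by simp

lemma curve_uv_pos:
  assumes "M \<in> curveC a K" "1 \<le> a" "K > (cA a)^2/9"
  shows "(M$1)^2 + (M$2)^2 > 0"
proof (rule ccontr)
  assume "\<not> ?thesis"
  hence "(M$1)^2 = 0" "(M$2)^2 = 0" using zero_le_power2[of "M$1"] zero_le_power2[of "M$2"] by linarith+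
  hence z: "M$1 = 0" "M$2 = 0" by auto
  hence "M$3 = - cA a / 3" using curve_eqs(1)[OF assms(1,2)] by simp
  hence "K = (cA a)^2/9" using curve_eqs(2)[OF assms(1,2)] z by (simp add: power2_eq_square)
  thus False using assms(3) by simp
qed

lemma ray_unique:
  assumes M: "M \<in> curveC a K" and M': "M' \<in> curveC a K" and a: "1 \<le> a" "a < sqrt 3"
    and mu: "mu > 0" "M'$1 = mu * M$1" "M'$2 = mu * M$2" and K: "K > (cA a)^2/9"
  shows "M' = M"
proof -
  define c where "c = cA a"
  define N where "N = (M$1)^2 + (M$2)^2"
  define Q where "Q = a * (M$1)^2 + (1/a) * (M$2)^2"
  define x where "x = mu^2"
  have Npos: "N > 0" unfolding N_def by (rule curve_uv_pos[OF M a(1) K])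
  have Qnn: "Q \<ge> 0" unfolding Q_def using a by auto
  have QN: "Q \<le> a * N"
  proof -
    have "(1/a) * (M$2)^2 \<le> a * (M$2)^2" using a(1)
      by (intro mult_right_mono) (use mult_mono[of 1 a 1 a] in \<open>auto simp: field_simps\<close>)
    thus ?thesis unfolding Q_def N_def by (simp add: algebra_simps)
  qed
  have a2: "a^2 < 3"
  proof -
    have "a^2 < (sqrt 3)^2" using a by (intro power_strict_mono) auto
    thus ?thesis by simp
  qed
  have ac: "a * c < 9/2" unfolding c_def cA_def using a2 a(1) by (simp add: field_simps power2_eq_square)
  have c0: "c > 0" unfolding c_def using cA_pos a(1) by auto
  have w: "M$3 = (Q - c)/3" "N + (M$3)^2 = K" using curve_eqs[OF M a(1)] unfolding Q_def N_def c_def by auto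
  have w': "M'$3 = (x*Q - c)/3" "x*N + (M'$3)^2 = K" using curve_eqs[OF M' a(1)] mu
    unfolding Q_def N_def c_def x_def by (auto simp: power_mult_distrib algebra_simps)
  have "x*N + ((x*Q - c)/3)^2 = N + ((Q-c)/3)^2" using w(2) w'(2) unfolding w(1) w'(1) by simp
  hence eq: "(x - 1) * (N + Q*((x+1)*Q - 2*c)/9) = 0"
    by (simp add: power2_eq_square field_simps)
  have "Q*c \<le> a*N*c" using QN c0 by (simp add: mult_right_mono)
  moreover have "a*N*c < 9/2 * N" using ac Npos by (simp add: mult.commute mult.left_commute)
  moreover have "Q*((x+1)*Q) \<ge> 0" unfolding x_def using Qnn by simp
  ultimately have "9*N + Q*((x+1)*Q) - 2*(Q*c) > 0" by linarith
  moreover have "Q*((x+1)*Q - 2*c) = Q*((x+1)*Q) - 2*(Q*c)" by (simp add: algebra_simps)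
  ultimately have "9*N + Q*((x+1)*Q - 2*c) > 0" by linarith
  moreover have "\<And>n e::real. 9*n + e > 0 \<Longrightarrow> n + e/9 > 0" by linarith
  ultimately have "N + Q*((x+1)*Q - 2*c)/9 > 0" by blast
  with eq have "x = 1" by simp
  hence "mu = 1" using mu(1) unfolding x_def by (simp add: power2_eq_1_iff)
  hence "M'$1 = M$1" "M'$2 = M$2" "M'$3 = M$3" using mu w w' \<open>x = 1\<close> by auto
  thus ?thesis by (simp add: vec_eq_iff forall_3)
qed

definition Wf :: "real \<Rightarrow> real \<Rightarrow> real^3 \<Rightarrow> real" where
  "Wf a lam M = (lam * M$1 * (a * M$1 * M$3 + 3/2 * M$1) - M$2 * (lam * (-(1/a) * M$2 * M$3 - 3/2 * M$2)))
      / ((lam * M$1)^2 + (M$2)^2)"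

lemma period_bounds:
  fixes m :: "real \<Rightarrow> real^3"
  assumes per: "periodic_sol_on a K m T" and a: "1 \<le> a" and K: "K > (cA a)^2/9" and lam: "lam > 0"
    and lo: "lo > 0" and bnd: "\<And>M. M \<in> curveC a K \<Longrightarrow> lo \<le> Wf a lam M \<and> Wf a lam M \<le> hi"
  shows "2*pi \<le> T * hi" and "a < sqrt 3 \<Longrightarrow> T \<le> 2*pi/lo"
proof -
  have dv: "\<forall>t. (m has_vector_derivative fieldF a (m t)) (at t)" and T0: "T > 0" and mT: "m T = m 0"
    and minT: "\<forall>s\<in>{0<..<T}. m s \<noteq> m 0"
    using per unfolding periodic_sol_on_def by auto
  note d = comp_deriv'[OF dv]
  have oc: "m t \<in> curveC a K" for t by (rule on_curve[OF per a])
  have cm: "continuous_on UNIV (\<lambda>t. m t $ i)" for i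
    by (intro continuous_at_imp_continuous_on ballI DERIV_isCont[OF comp_deriv[OF dv]])
  define X where "X = (\<lambda>t. lam * m t $ 1)"
  define Y where "Y = (\<lambda>t. m t $ 2)"
  define X' where "X' = (\<lambda>t. lam * (-(1/a) * m t$2 * m t$3 - 3/2 * m t$2))"
  define Y' where "Y' = (\<lambda>t. a * m t$1 * m t$3 + 3/2 * m t$1)"
  define W where "W = (\<lambda>s. (X s * Y' s - Y s * X' s) / (X s ^ 2 + Y s ^ 2))"
  have WW: "W s = Wf a lam (m s)" for s unfolding W_def Wf_def X_def Y_def X'_def Y'_def by simp
  have dX: "(X has_real_derivative X' t) (at t)" for t
    unfolding X_def X'_def by (rule derivative_eq_intros d refl)+ simp
  have dY: "(Y has_real_derivative Y' t) (at t)" for t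
    unfolding Y_def Y'_def by (rule d)
  have cX': "continuous_on UNIV X'" unfolding X'_def by (intro continuous_intros cm)
  have cY': "continuous_on UNIV Y'" unfolding Y'_def by (intro continuous_intros cm)
  have nz: "X t ^ 2 + Y t ^ 2 > 0" for t
  proof -
    have "(m t$1)^2 + (m t$2)^2 > 0" by (rule curve_uv_pos[OF oc a K])
    thus ?thesis unfolding X_def Y_def using lam
      by (cases "m t $ 1 = 0") (auto simp: power_mult_distrib intro: add_pos_nonneg)
  qed
  note AL = angle_lift[OF dX dY cX' cY' nz W_def]
  have cW: "continuous_on UNIV W" by (rule AL(3)[OF order_refl])
  define Th where "Th = (\<lambda>t. integral {0..t} W)"
  have intW: "W integrable_on {0..t}" for t by (rule integrable_continuous_real[OF continuous_on_subset[OF cW]]) auto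
  have Thlo: "Th t \<ge> lo * t" if "t \<ge> 0" for t
  proof -
    have "integral {0..t} (\<lambda>_. lo) \<le> integral {0..t} W"
      by (rule integral_le[OF integrable_const_ivl intW]) (use bnd oc WW in auto)
    thus ?thesis unfolding Th_def using that by (simp add: mult.commute)
  qed
  have Thhi: "Th t \<le> hi * t" if "t \<ge> 0" for t
  proof -
    have "integral {0..t} W \<le> integral {0..t} (\<lambda>_. hi)"
      by (rule integral_le[OF intW integrable_const_ivl]) (use bnd oc WW in auto)
    thus ?thesis unfolding Th_def using that by (simp add: mult.commute)
  qed
  have Th0: "Th 0 = 0" unfolding Th_def by simp
  have R0: "sqrt (X 0 ^ 2 + Y 0 ^ 2) * sqrt (X 0 ^ 2 + Y 0 ^ 2) = X 0 ^ 2 + Y 0 ^ 2"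
    using nz[of 0] by simp
  have XT: "X T = X 0" "Y T = Y 0" unfolding X_def Y_def using mT by auto
  have "(X 0 ^ 2 + Y 0 ^ 2) * cos (Th T) = X 0 ^ 2 + Y 0 ^ 2"
    using AL(2)[of T] T0 XT R0 unfolding Th_def
    by (simp add: algebra_simps power2_eq_square)
  moreover have "X 0 ^ 2 + Y 0 ^ 2 \<noteq> 0" using nz[of 0] by linarith
  ultimately have "cos (Th T) = 1" by (simp, blast)
  then obtain n :: int where n: "Th T = n * 2 * pi" by (auto simp: cos_one_2pi_int)
  have "lo * T > 0" using lo T0 by simp
  hence "Th T > 0" using Thlo[of T] T0 by linarith
  hence "real_of_int n * (2*pi) > 0" using n by (simp add: mult.assoc)
  hence "real_of_int n > 0" by (simp add: zero_less_mult_iff)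
  hence "n \<ge> 1" by simp
  hence "real_of_int n \<ge> 1" by simp
  hence "Th T \<ge> 2*pi" using n by (simp add: mult.commute)
  thus "2*pi \<le> T * hi" using Thhi[of T] T0 by (simp add: mult.commute)
  assume a3: "a < sqrt 3"
  define L where "L = 2*pi/lo"
  have L0: "L > 0" unfolding L_def using lo by simp
  have cTh: "continuous_on {0..L} Th" unfolding Th_def by (rule indefinite_integral_continuous_1[OF intW])
  have "Th L \<ge> 2*pi" using Thlo[of L] L0 lo unfolding L_def by simp
  then obtain s where s: "0 \<le> s" "s \<le> L" "Th s = 2*pi"
    using IVT'[of Th 0 "2*pi" L, OF _ _ _ cTh] Th0 L0 by auto
  have s0: "s > 0" using s Th0 by (cases "s = 0") auto
  have cs: "cos (Th s) = 1" "sin (Th s) = 0" using s(3) by auto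
  have e1: "X s * Y 0 - Y s * X 0 = 0" using AL(1)[of s] s cs unfolding Th_def by simp
  have e2: "X s * X 0 + Y s * Y 0 = sqrt (X s ^ 2 + Y s ^ 2) * sqrt (X 0 ^ 2 + Y 0 ^ 2)"
    using AL(2)[of s] s cs unfolding Th_def by simp
  define mu where "mu = sqrt (X s ^ 2 + Y s ^ 2) / sqrt (X 0 ^ 2 + Y 0 ^ 2)"
  have mu0: "mu > 0" unfolding mu_def using nz[of s] nz[of 0] by simp
  have r0: "sqrt (X 0 ^ 2 + Y 0 ^ 2) > 0" using nz[of 0] by simp
  have nz0: "X 0 ^ 2 + Y 0 ^ 2 \<noteq> 0" using nz[of 0] by linarith
  have gen: "\<And>rs r x::real. r > 0 \<Longrightarrow> rs / r * x * (r * r) = rs * r * x" by (simp add: field_simps)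
  have "X s * (X 0 ^ 2 + Y 0 ^ 2) = (X s * X 0 + Y s * Y 0) * X 0 + (X s * Y 0 - Y s * X 0) * Y 0"
    by (simp add: algebra_simps power2_eq_square)
  also have "\<dots> = sqrt (X s ^ 2 + Y s ^ 2) * sqrt (X 0 ^ 2 + Y 0 ^ 2) * X 0" using e1 e2 by simp
  also have "\<dots> = mu * X 0 * (sqrt (X 0 ^ 2 + Y 0 ^ 2) * sqrt (X 0 ^ 2 + Y 0 ^ 2))"
    unfolding mu_def using gen[OF r0] by simp
  also have "\<dots> = mu * X 0 * (X 0 ^ 2 + Y 0 ^ 2)" using R0 by simp
  finally have xs: "X s = mu * X 0" by (rule mult_right_cancel[THEN iffD1, OF nz0])
  have "Y s * (X 0 ^ 2 + Y 0 ^ 2) = (X s * X 0 + Y s * Y 0) * Y 0 - (X s * Y 0 - Y s * X 0) * X 0"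
    by (simp add: algebra_simps power2_eq_square)
  also have "\<dots> = sqrt (X s ^ 2 + Y s ^ 2) * sqrt (X 0 ^ 2 + Y 0 ^ 2) * Y 0" using e1 e2 by simp
  also have "\<dots> = mu * Y 0 * (sqrt (X 0 ^ 2 + Y 0 ^ 2) * sqrt (X 0 ^ 2 + Y 0 ^ 2))"
    unfolding mu_def using gen[OF r0] by simp
  also have "\<dots> = mu * Y 0 * (X 0 ^ 2 + Y 0 ^ 2)" using R0 by simp
  finally have ys: "Y s = mu * Y 0" by (rule mult_right_cancel[THEN iffD1, OF nz0])
  have "m s $ 1 = mu * m 0 $ 1" using xs lam unfolding X_def by simp
  moreover have "m s $ 2 = mu * m 0 $ 2" using ys unfolding Y_def by simp
  ultimately have "m s = m 0" using ray_unique[OF oc[of 0] oc[of s] a a3 mu0 _ _ K] by simp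
  hence "\<not> s < T" using minT s0 by auto
  thus "T \<le> 2*pi/lo" using s(2) unfolding L_def by simp
qed

lemma Wf_expr:
  "Wf a lam M = lam * ((a * M$3 + 3/2) * (M$1)^2 + (M$3/a + 3/2) * (M$2)^2) / ((lam * M$1)^2 + (M$2)^2)"
  unfolding Wf_def by (simp add: algebra_simps power2_eq_square)

lemma Wf_lower:
  assumes lam: "lam > 0" and D: "(lam * M$1)^2 + (M$2)^2 > 0"
    and B: "blo \<le> a * M$3 + 3/2" and A: "alo \<le> M$3/a + 3/2"
    and l1: "lo * lam \<le> blo" and l2: "lo \<le> lam * alo"
  shows "lo \<le> Wf a lam M"
proof -
  have "lo * ((lam * M$1)^2 + (M$2)^2) = lam * ((lo * lam) * (M$1)^2) + lo * (M$2)^2"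
    by (simp add: algebra_simps power2_eq_square)
  also have "\<dots> \<le> lam * (blo * (M$1)^2) + lam * alo * (M$2)^2"
    using l1 l2 lam by (intro add_mono mult_left_mono mult_right_mono) auto
  also have "\<dots> \<le> lam * ((a * M$3 + 3/2) * (M$1)^2) + lam * (M$3/a + 3/2) * (M$2)^2"
    using A B lam by (intro add_mono mult_left_mono mult_right_mono) auto
  also have "\<dots> = lam * ((a * M$3 + 3/2) * (M$1)^2 + (M$3/a + 3/2) * (M$2)^2)"
    by (simp add: algebra_simps)
  finally show ?thesis unfolding Wf_expr using D by (simp add: pos_le_divide_eq)
qed

lemma Wf_upper:
  assumes lam: "lam > 0" and D: "(lam * M$1)^2 + (M$2)^2 > 0"
    and B: "a * M$3 + 3/2 \<le> bhi" and A: "M$3/a + 3/2 \<le> ahi"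
    and l1: "bhi \<le> hi * lam" and l2: "lam * ahi \<le> hi"
  shows "Wf a lam M \<le> hi"
proof -
  have "lam * ((a * M$3 + 3/2) * (M$1)^2 + (M$3/a + 3/2) * (M$2)^2)
      = lam * ((a * M$3 + 3/2) * (M$1)^2) + lam * (M$3/a + 3/2) * (M$2)^2"
    by (simp add: algebra_simps)
  also have "\<dots> \<le> lam * (bhi * (M$1)^2) + lam * ahi * (M$2)^2"
    using A B lam by (intro add_mono mult_left_mono mult_right_mono) auto
  also have "\<dots> \<le> lam * ((hi * lam) * (M$1)^2) + hi * (M$2)^2"
    using l1 l2 lam by (intro add_mono mult_left_mono mult_right_mono) auto
  also have "\<dots> = hi * ((lam * M$1)^2 + (M$2)^2)"
    by (simp add: algebra_simps power2_eq_square)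
  finally show ?thesis unfolding Wf_expr using D by (simp add: pos_divide_le_eq)
qed

lemma curve_AB:
  assumes "M \<in> curveC a K" "1 \<le> a"
  shows "M$3/a + 3/2 = (M$1)^2/3 + (M$2)^2/(3*a^2) + (3/2 - cA a/(3*a))"
    and "a * M$3 + 3/2 = a^2 * (M$1)^2/3 + (M$2)^2/3 + (3/2 - a * cA a/3)"
  unfolding curve_eqs(1)[OF assms] using assms(2) by (simp_all add: field_simps power2_eq_square)

lemma curve_AB_bounds:
  assumes "M \<in> curveC a K" "1 \<le> a"
  shows "M$3/a + 3/2 \<ge> 3/2 - cA a/(3*a)"
    and "M$3/a + 3/2 \<le> 3/2 - cA a/(3*a) + ((M$1)^2 + (M$2)^2)/3"
    and "a * M$3 + 3/2 \<ge> 3/2 - a * cA a/3 + ((M$1)^2 + (M$2)^2)/3"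
    and "a * M$3 + 3/2 \<le> 3/2 - a * cA a/3 + a^2 * ((M$1)^2 + (M$2)^2)/3"
proof -
  have a2: "a^2 \<ge> 1" using assms(2) by (simp add: one_le_power)
  have "(M$2)^2/(3*a^2) \<le> (M$2)^2/3" using a2 by (intro divide_left_mono) auto
  moreover have "(M$2)^2/(3*a^2) \<ge> 0" by simp
  moreover have "a^2 * (M$1)^2 \<ge> (M$1)^2" using a2 by (simp add: mult_right_mono[of 1 "a^2", simplified])
  moreover have "(M$2)^2 \<le> a^2 * (M$2)^2" using a2 by (simp add: mult_right_mono[of 1 "a^2", simplified])
  ultimately show "M$3/a + 3/2 \<ge> 3/2 - cA a/(3*a)"
    and "M$3/a + 3/2 \<le> 3/2 - cA a/(3*a) + ((M$1)^2 + (M$2)^2)/3"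
    and "a * M$3 + 3/2 \<ge> 3/2 - a * cA a/3 + ((M$1)^2 + (M$2)^2)/3"
    and "a * M$3 + 3/2 \<le> 3/2 - a * cA a/3 + a^2 * ((M$1)^2 + (M$2)^2)/3"
    unfolding curve_AB[OF assms] by (simp_all add: field_simps)
qed

lemma region_prop:
  assumes x: "x \<in> regionD a K" and a: "1 \<le> a" and K: "K > (cA a)^2/9"
  shows "(x$1)^2 + (x$2)^2 + (x$3)^2 = K \<and> a * (x$1)^2 + (1/a) * (x$2)^2 - 3 * (x$3) - cA a > 0"
proof -
  define P where "P = (\<lambda>y::real^3. a * (y$1)^2 + (1/a) * (y$2)^2 - 3 * (y$3) - cA a)"
  define pole where "pole = (vector [0, 0, - sqrt K] :: real^3)"
  define S where "S = sphere (0::real^3) (sqrt K) - curveC a K"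
  have K0: "K > 0" using K by (smt (verit) zero_le_power2 divide_nonneg_pos)
  obtain U where U: "connected U" "U \<subseteq> S" "pole \<in> U" "x \<in> U"
    using x unfolding regionD_def connected_component_def pole_def S_def by blast
  have sph: "(y$1)^2 + (y$2)^2 + (y$3)^2 = K" if "y \<in> S" for y
  proof -
    have "norm y = sqrt K" using that unfolding S_def by simp
    hence "sqrt ((y$1)^2 + (y$2)^2 + (y$3)^2) = sqrt K" by (simp add: norm3)
    thus ?thesis by simp
  qed
  have nz: "P y \<noteq> 0" if "y \<in> S" for y
    using that sph[OF that] unfolding S_def curveC_def P_def by auto
  have c0: "cA a > 0" using cA_pos a by auto
  have "sqrt K > sqrt ((cA a)^2/9)" using K by simp
  moreover have "sqrt ((cA a)^2/9) = cA a / 3" using c0 by (simp add: real_sqrt_divide)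
  ultimately have Ppole: "P pole > 0" unfolding P_def pole_def by simp
  have cP: "continuous_on U P" unfolding P_def by (intro continuous_intros)
  have cI: "connected (P ` U)" by (rule connected_continuous_image[OF cP U(1)])
  have "P x > 0"
  proof (rule ccontr)
    assume "\<not> P x > 0"
    hence "P x \<le> 0" by simp
    hence "0 \<in> P ` U" using connectedD_interval[OF cI, of "P x" "P pole" 0] U Ppole by auto
    then obtain y where "y \<in> U" "P y = 0" by auto
    thus False using nz U(2) by auto
  qed
  thus ?thesis using sph U unfolding P_def by auto
qed

lemma sphere_param3: "sphere_param R p $ 3 = R * cos (snd p)"
  unfolding sphere_param_def by simp

lemma area_bounds:
  assumes a: "1 \<le> a" and K: "K > (cA a)^2/9" and yp0: "yp a K \<le> 0"
  shows "0 \<le> sphere_area (sqrt K) (regionD a K)"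
    and "sphere_area (sqrt K) (regionD a K) \<le> 2*pi*pi*(K * sqrt \<bar>1 - (yp a K)^2/K\<bar>)"
proof -
  define E where "E = K * sqrt \<bar>1 - (yp a K)^2/K\<bar>"
  define f where "f = (\<lambda>p. indicator (regionD a K) (sphere_param (sqrt K) p) * (sqrt K)^2 * sin (snd p))"
  define B where "B = ({0..2*pi} \<times> {0..pi} :: (real \<times> real) set)"
  have K0: "K > 0" using K by (smt (verit) zero_le_power2 divide_nonneg_pos)
  have E0: "E \<ge> 0" unfolding E_def using K0 by simp
  have fb: "0 \<le> f p \<and> f p \<le> E" if "p \<in> B" for p
  proof (cases "sphere_param (sqrt K) p \<in> regionD a K")
    case False thus ?thesis unfolding f_def using E0 by simp
  next
    case True
    have sn: "sin (snd p) \<ge> 0" using that unfolding B_def by (auto intro: sin_ge_zero)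
    define M where "M = sphere_param (sqrt K) p"
    have "M$3 \<le> yp a K" using region_prop[OF True[folded M_def] a K]
      by (intro below_yp[OF a]) auto
    hence le: "sqrt K * cos (snd p) \<le> yp a K" unfolding M_def sphere_param3 .
    hence "(- yp a K)^2 \<le> (- (sqrt K * cos (snd p)))^2" using yp0
      by (intro power_mono) auto
    hence "(yp a K)^2 \<le> (sqrt K * cos (snd p))^2" by simp
    hence "(yp a K)^2 \<le> K * (cos (snd p))^2" using K0 by (simp add: power_mult_distrib)
    hence "(yp a K)^2/K \<le> (cos (snd p))^2" using K0 by (simp add: divide_le_eq mult.commute)
    hence "(sin (snd p))^2 \<le> 1 - (yp a K)^2/K" by (simp add: sin_squared_eq)
    hence "(sin (snd p))^2 \<le> \<bar>1 - (yp a K)^2/K\<bar>" by linarith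
    hence "sqrt ((sin (snd p))^2) \<le> sqrt \<bar>1 - (yp a K)^2/K\<bar>" by (rule real_sqrt_le_mono)
    hence "sin (snd p) \<le> sqrt \<bar>1 - (yp a K)^2/K\<bar>" using sn by simp
    hence "K * sin (snd p) \<le> E" unfolding E_def using K0 by simp
    thus ?thesis unfolding f_def using True sn K0 by simp
  qed
  have Bc: "B = cbox (0,0) (2*pi, pi)" unfolding B_def by (simp add: cbox_Pair_eq)
  have cB: "Henstock_Kurzweil_Integration.content B = 2*pi*pi" unfolding Bc content_Pair by simp
  have "0 \<le> integral B f \<and> integral B f \<le> 2*pi*pi*E"
  proof (cases "f integrable_on B")
    case True
    have "0 \<le> integral B f" using fb by (intro Henstock_Kurzweil_Integration.integral_nonneg[OF True]) auto
    moreover have "integral B f \<le> integral B (\<lambda>_. E)"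
      using fb by (intro integral_le[OF True]) (auto simp: Bc)
    moreover have "integral B (\<lambda>_. E) = 2*pi*pi*E" using cB unfolding Bc by simp
    ultimately show ?thesis by simp
  next
    case False thus ?thesis using E0 by (simp add: not_integrable_integral)
  qed
  thus "0 \<le> sphere_area (sqrt K) (regionD a K)"
    and "sphere_area (sqrt K) (regionD a K) \<le> 2*pi*pi*(K * sqrt \<bar>1 - (yp a K)^2/K\<bar>)"
    unfolding sphere_area_def f_def B_def E_def by auto
qed

lemma curve_N_bounds:
  assumes M: "M \<in> curveC a K" and a: "1 \<le> a" and yp0: "yp a K \<le> 0"
  shows "K - (cA a)^2/9 \<le> (M$1)^2 + (M$2)^2" and "(M$1)^2 + (M$2)^2 \<le> K - (yp a K)^2"
proof -
  have w1: "M$3 \<ge> - cA a/3" by (rule curve_w_ge[OF M a])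
  have w2: "M$3 \<le> yp a K" by (rule curve_w_le[OF M a])
  have S: "(M$1)^2 + (M$2)^2 = K - (M$3)^2" using curve_eqs(2)[OF M a] by simp
  have "(- M$3)^2 \<le> (cA a/3)^2" using w1 w2 yp0 by (intro power_mono) auto
  hence "(M$3)^2 \<le> (cA a)^2/9" by (simp add: power_divide)
  thus "K - (cA a)^2/9 \<le> (M$1)^2 + (M$2)^2" using S by simp
  have "(- yp a K)^2 \<le> (- M$3)^2" using w2 yp0 by (intro power_mono) auto
  thus "(M$1)^2 + (M$2)^2 \<le> K - (yp a K)^2" using S by simp
qed

lemma berry_common:
  assumes per: "periodic_sol_on a K m T" and a: "1 \<le> a" and K: "K > (cA a)^2/9" and yp0: "yp a K \<le> 0"
  shows "berry_phase a K m T \<ge> 1 / sqrt K * (T * (cA a / 2))"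
    and "berry_phase a K m T \<le> 1 / sqrt K * (T * (3/2 * yp a K + cA a)) + 2*pi*pi*(K * sqrt \<bar>1 - (yp a K)^2/K\<bar>)"
    and "3/2 * yp a K + cA a \<ge> 0"
proof -
  have dv: "\<forall>t. (m has_vector_derivative fieldF a (m t)) (at t)" and T0: "T > 0"
    using per unfolding periodic_sol_on_def by auto
  have oc: "m t \<in> curveC a K" for t by (rule on_curve[OF per a])
  have cm: "continuous_on UNIV (\<lambda>t. m t $ i)" for i
    by (intro continuous_at_imp_continuous_on ballI DERIV_isCont[OF comp_deriv[OF dv]])
  define g where "g = (\<lambda>t. 3/2 * m t $ 3 + cA a)"
  have cg: "continuous_on UNIV g" unfolding g_def by (intro continuous_intros cm)
  have ig: "g integrable_on {0..T}"
    by (rule integrable_continuous_real[OF continuous_on_subset[OF cg]]) simp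
  have gb: "cA a / 2 \<le> g t \<and> g t \<le> 3/2 * yp a K + cA a" for t
    using curve_w_ge[OF oc[of t] a] curve_w_le[OF oc[of t] a] unfolding g_def by auto
  have "integral {0..T} (\<lambda>_. cA a / 2) \<le> integral {0..T} g"
    by (rule integral_le[OF integrable_const_ivl ig]) (use gb in auto)
  hence I1: "T * (cA a / 2) \<le> integral {0..T} g" using T0 by simp
  have "integral {0..T} g \<le> integral {0..T} (\<lambda>_. 3/2 * yp a K + cA a)"
    by (rule integral_le[OF ig integrable_const_ivl]) (use gb in auto)
  hence I2: "integral {0..T} g \<le> T * (3/2 * yp a K + cA a)" using T0 by simp
  have "(cA a)^2/9 \<ge> 0" by simp
  hence "K > 0" using K by linarith
  hence sK: "1 / sqrt K > 0" by simp
  note AB = area_bounds[OF a K yp0]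
  have bp: "berry_phase a K m T = 1 / sqrt K * integral {0..T} g + sphere_area (sqrt K) (regionD a K)"
    unfolding berry_phase_def g_def by simp
  show "berry_phase a K m T \<ge> 1 / sqrt K * (T * (cA a / 2))"
    unfolding bp using mult_left_mono[OF I1, of "1 / sqrt K"] sK AB(1) by linarith
  show "berry_phase a K m T \<le> 1 / sqrt K * (T * (3/2 * yp a K + cA a)) + 2*pi*pi*(K * sqrt \<bar>1 - (yp a K)^2/K\<bar>)"
    unfolding bp using mult_left_mono[OF I2, of "1 / sqrt K"] sK AB(2) by linarith
  show "3/2 * yp a K + cA a \<ge> 0" using gb[of 0] cA_pos[OF a] by linarith
qed

lemma dpos:
  assumes "M \<in> curveC a K" "1 \<le> a" "K > (cA a)^2/9" "lam > 0"
  shows "(lam * M$1)^2 + (M$2)^2 > 0"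
proof -
  have "(M$1)^2 + (M$2)^2 > 0" by (rule curve_uv_pos[OF assms(1-3)])
  thus ?thesis using assms(4)
    by (cases "M $ 1 = 0") (auto simp: power_mult_distrib intro: add_pos_nonneg)
qed

definition alpha :: "real \<Rightarrow> real" where "alpha a = 3/2 - cA a/(3*a)"
definition beta :: "real \<Rightarrow> real" where "beta a = 3/2 - a * cA a/3"
definition lamL :: "real \<Rightarrow> real" where "lamL a = sqrt (beta a / alpha a)"
definition om :: "real \<Rightarrow> real" where "om a = sqrt (alpha a * beta a)"
definition hiL :: "real \<Rightarrow> real \<Rightarrow> real" where
  "hiL a K = om a + (K - (yp a K)^2) * (a^2 / lamL a + lamL a) / 3"

lemma alpha_eq: "1 \<le> a \<Longrightarrow> alpha a = 3 * (3 * a^2 - 1) / (8 * a^2)"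
  unfolding alpha_def cA_def by (simp add: field_simps power2_eq_square)

lemma beta_eq: "1 \<le> a \<Longrightarrow> beta a = 3 * (3 - a^2) / 8"
  unfolding beta_def cA_def by (simp add: field_simps power2_eq_square)

lemma alpha_pos: "1 \<le> a \<Longrightarrow> alpha a > 0"
proof -
  assume a: "1 \<le> a"
  hence "a^2 \<ge> 1" by (simp add: one_le_power)
  hence "3 * (3 * a^2 - 1) > 0" "8 * a^2 > 0" by auto
  thus ?thesis unfolding alpha_eq[OF a] by (rule divide_pos_pos)
qed

lemma a2_lt: "1 \<le> a \<Longrightarrow> a < sqrt 3 \<Longrightarrow> a^2 < 3"
proof -
  assume "1 \<le> a" "a < sqrt 3"
  hence "a^2 < (sqrt 3)^2" by (intro power_strict_mono) auto
  thus ?thesis by simp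
qed

lemma beta_pos: "1 \<le> a \<Longrightarrow> a < sqrt 3 \<Longrightarrow> beta a > 0"
proof -
  assume a: "1 \<le> a" "a < sqrt 3"
  have "a^2 < 3" by (rule a2_lt[OF a])
  thus ?thesis unfolding beta_eq[OF a(1)] by simp
qed

lemma lam_facts:
  assumes a: "1 \<le> a" "a < sqrt 3"
  shows "lamL a > 0" "om a > 0" "om a * lamL a = beta a" "lamL a * alpha a = om a"
proof -
  have al: "alpha a > 0" by (rule alpha_pos[OF a(1)])
  have be: "beta a > 0" by (rule beta_pos[OF a])
  show "lamL a > 0" unfolding lamL_def using al be by simp
  show "om a > 0" unfolding om_def using al be by simp
  have "om a * lamL a = sqrt (alpha a * beta a * (beta a / alpha a))"
    unfolding om_def lamL_def by (rule real_sqrt_mult[symmetric])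
  also have "alpha a * beta a * (beta a / alpha a) = (beta a)^2" using al by (simp add: field_simps power2_eq_square)
  finally show "om a * lamL a = beta a" using be by simp
  have "lamL a * alpha a = sqrt (beta a / alpha a) * sqrt ((alpha a)^2)" unfolding lamL_def using al by simp
  also have "\<dots> = sqrt (beta a / alpha a * (alpha a)^2)" by (rule real_sqrt_mult[symmetric])
  also have "beta a / alpha a * (alpha a)^2 = alpha a * beta a" using al by (simp add: field_simps power2_eq_square)
  finally show "lamL a * alpha a = om a" unfolding om_def by simp
qed

lemma case_lt:
  assumes per: "periodic_sol_on a K m T" and a: "1 \<le> a" "a < sqrt 3"
    and K: "K > (cA a)^2/9" and yp0: "yp a K \<le> 0"
  shows "T \<le> 2*pi/om a" and "2*pi \<le> T * hiL a K"
proof -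
  note LF = lam_facts[OF a]
  define lam where "lam = lamL a"
  define rho where "rho = K - (yp a K)^2"
  have rho0: "rho \<ge> 0"
    using curve_N_bounds(2)[OF on_curve[OF per a(1), of 0] a(1) yp0] unfolding rho_def
    by (smt (verit) zero_le_power2)
  have lam0: "lam > 0" unfolding lam_def using LF by simp
  have bnd: "\<And>M. M \<in> curveC a K \<Longrightarrow> om a \<le> Wf a lam M \<and> Wf a lam M \<le> hiL a K"
  proof
    fix M assume M: "M \<in> curveC a K"
    define N where "N = (M$1)^2 + (M$2)^2"
    have Nr: "N \<le> rho" unfolding N_def rho_def by (rule curve_N_bounds(2)[OF M a(1) yp0])
    have N0: "N \<ge> 0" unfolding N_def by simp
    note AB = curve_AB_bounds[OF M a(1), folded N_def alpha_def beta_def]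
    have D: "(lam * M$1)^2 + (M$2)^2 > 0" by (rule dpos[OF M a(1) K lam0])
    show "om a \<le> Wf a lam M"
      by (rule Wf_lower[OF lam0 D, where blo="beta a" and alo="alpha a"]) (use AB N0 LF in \<open>auto simp: lam_def\<close>)
    have a2: "a^2 * N \<le> a^2 * rho" using Nr by (simp add: mult_left_mono)
    have hl: "hiL a K * lam = beta a + rho * (a^2 + lam^2) / 3"
      unfolding hiL_def rho_def[symmetric] lam_def[symmetric] using lam0 LF(3)
      by (simp add: field_simps power2_eq_square lam_def)
    have l2: "lam * (alpha a + rho/3) \<le> hiL a K"
    proof -
      have "lam * (alpha a + rho/3) = om a + lam * rho / 3" using LF(4) unfolding lam_def by (simp add: algebra_simps)
      also have "\<dots> \<le> om a + rho * (a^2 / lam + lam) / 3"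
        using rho0 lam0 by (simp add: algebra_simps divide_right_mono)
      finally show ?thesis unfolding hiL_def rho_def lam_def .
    qed
    show "Wf a lam M \<le> hiL a K"
    proof (rule Wf_upper[OF lam0 D, where bhi="beta a + a^2 * rho / 3" and ahi="alpha a + rho/3"])
      show "a * M $ 3 + 3 / 2 \<le> beta a + a\<^sup>2 * rho / 3" using AB(4) a2 by linarith
      show "M $ 3 / a + 3 / 2 \<le> alpha a + rho / 3" using AB(2) Nr by linarith
      show "beta a + a\<^sup>2 * rho / 3 \<le> hiL a K * lam" unfolding hl using rho0
        by (simp add: algebra_simps)
      show "lam * (alpha a + rho / 3) \<le> hiL a K" by (rule l2)
    qed
  qed
  have om0: "om a > 0" using LF by simp
  note PB = period_bounds[OF per a(1) K lam0 om0 bnd]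
  show "T \<le> 2*pi/om a" using PB(2) a(2) by blast
  show "2*pi \<le> T * hiL a K" using PB(1) by blast
qed

definition hiE :: "real \<Rightarrow> real \<Rightarrow> real" where
  "hiE a K = sqrt (K - (yp a K)^2) * (alpha a + 1 + (K - (yp a K)^2)/3)"

lemma case_eq:
  assumes per: "periodic_sol_on a K m T" and a: "a = sqrt 3"
    and K: "K > (cA a)^2/9" and yp0: "yp a K \<le> 0"
  shows "2*pi \<le> T * hiE a K" and "hiE a K > 0"
proof -
  have a1: "1 \<le> a" unfolding a by simp
  have a2: "a^2 = 3" unfolding a by simp
  have be: "beta a = 0" unfolding beta_eq[OF a1] a2 by simp
  have al: "alpha a > 0" by (rule alpha_pos[OF a1])
  define rho where "rho = K - (yp a K)^2"
  define kap where "kap = K - (cA a)^2/9"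
  have kap0: "kap > 0" unfolding kap_def using K by simp
  have kr: "kap \<le> rho" unfolding kap_def rho_def
    using curve_N_bounds[OF on_curve[OF per a1, of 0] a1 yp0] by linarith
  define lam where "lam = sqrt rho"
  have lam0: "lam > 0" unfolding lam_def using kap0 kr by simp
  have lam2: "lam * lam = rho" unfolding lam_def using kap0 kr by simp
  define lo where "lo = min (kap / (3 * lam)) (lam * alpha a)"
  have lo0: "lo > 0" unfolding lo_def using kap0 lam0 al by simp
  have hl: "hiE a K = lam * (alpha a + 1 + rho/3)" unfolding hiE_def lam_def rho_def ..
  have bnd: "\<And>M. M \<in> curveC a K \<Longrightarrow> lo \<le> Wf a lam M \<and> Wf a lam M \<le> hiE a K"
  proof
    fix M assume M: "M \<in> curveC a K"
    define N where "N = (M$1)^2 + (M$2)^2"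
    have Nr: "N \<le> rho" unfolding N_def rho_def by (rule curve_N_bounds(2)[OF M a1 yp0])
    have Nk: "kap \<le> N" unfolding N_def kap_def by (rule curve_N_bounds(1)[OF M a1 yp0])
    note AB = curve_AB_bounds[OF M a1, folded N_def alpha_def beta_def]
    have D: "(lam * M$1)^2 + (M$2)^2 > 0" by (rule dpos[OF M a1 K lam0])
    have l1: "lo * lam \<le> kap / 3"
    proof -
      have "lo * lam \<le> kap / (3 * lam) * lam" unfolding lo_def using lam0 by (intro mult_right_mono) auto
      also have "\<dots> = kap / 3" using lam0 by simp
      finally show ?thesis .
    qed
    show "lo \<le> Wf a lam M"
    proof (rule Wf_lower[OF lam0 D, where blo="kap/3" and alo="alpha a"])
      show "kap / 3 \<le> a * M $ 3 + 3 / 2" using AB(3) Nk be by linarith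
      show "alpha a \<le> M $ 3 / a + 3 / 2" using AB(1) by linarith
      show "lo * lam \<le> kap / 3" by (rule l1)
      show "lo \<le> lam * alpha a" unfolding lo_def by simp
    qed
    show "Wf a lam M \<le> hiE a K"
    proof (rule Wf_upper[OF lam0 D, where bhi="rho" and ahi="alpha a + rho/3"])
      show "a * M $ 3 + 3 / 2 \<le> rho" using AB(4) Nr be a2 by simp
      show "M $ 3 / a + 3 / 2 \<le> alpha a + rho / 3" using AB(2) Nr by linarith
      have "rho * 1 \<le> rho * (alpha a + 1 + rho/3)" using kap0 kr al by (intro mult_left_mono) auto
      moreover have "hiE a K * lam = rho * (alpha a + 1 + rho/3)" unfolding hl lam2[symmetric] by (simp add: algebra_simps)
      ultimately show "rho \<le> hiE a K * lam" by simp
      have "lam * (alpha a + rho / 3) \<le> lam * (alpha a + 1 + rho/3)" using lam0 by simp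
      thus "lam * (alpha a + rho / 3) \<le> hiE a K" unfolding hl .
    qed
  qed
  note PB = period_bounds[OF per a1 K lam0 lo0 bnd]
  show "2*pi \<le> T * hiE a K" using PB(1) by blast
  show "hiE a K > 0" unfolding hl using lam0 al kap0 kr by simp
qed

lemma lim_basic:
  assumes a: "1 \<le> a" "a \<le> sqrt 3"
  shows "((\<lambda>K. yp a K) \<longlongrightarrow> - cA a / 3) (at_right ((cA a)^2/9))"
    and "((\<lambda>K. sqrt K) \<longlongrightarrow> cA a / 3) (at_right ((cA a)^2/9))"
    and "((\<lambda>K. K - (yp a K)^2) \<longlongrightarrow> 0) (at_right ((cA a)^2/9))"
    and "((\<lambda>K. 2*pi*pi*(K * sqrt \<bar>1 - (yp a K)^2/K\<bar>)) \<longlongrightarrow> 0) (at_right ((cA a)^2/9))"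
proof -
  define c where "c = cA a"
  have c0: "c > 0" unfolding c_def using cA_pos a by auto
  have ac: "a * c \<le> 9/2" unfolding c_def by (rule a_c_le[OF a])
  have id: "9 + 4*a*(a*(c^2/9) - c) = (3 - 2*a*c/3)^2" by (simp add: power2_eq_square field_simps)
  have "sqrt (9 + 4*a*(a*(c^2/9) - c)) = 3 - 2*a*c/3" unfolding id using ac by simp
  hence ypv: "(-3 + sqrt (9 + 4*a*(a*(c^2/9) - c))) / (2*a) = - c/3" using a by (simp add: field_simps)
  have "((\<lambda>K. yp a K) \<longlongrightarrow> (-3 + sqrt (9 + 4*a*(a*(c^2/9) - c))) / (2*a)) (at_right (c^2/9))"
    unfolding yp_def c_def[symmetric] by (intro tendsto_intros) (use a in auto)
  hence "((\<lambda>K. yp a K) \<longlongrightarrow> - c/3) (at_right (c^2/9))" by (simp only: ypv)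
  thus ypl: "((\<lambda>K. yp a K) \<longlongrightarrow> - cA a / 3) (at_right ((cA a)^2/9))" unfolding c_def .
  have "((\<lambda>K. sqrt K) \<longlongrightarrow> sqrt (c^2/9)) (at_right (c^2/9))" by (intro tendsto_intros)
  moreover have "sqrt (c^2/9) = c/3" using c0 by (simp add: real_sqrt_divide)
  ultimately show "((\<lambda>K. sqrt K) \<longlongrightarrow> cA a / 3) (at_right ((cA a)^2/9))" unfolding c_def by simp
  have "((\<lambda>K. K - (yp a K)^2) \<longlongrightarrow> c^2/9 - (- c/3)^2) (at_right (c^2/9))"
    by (intro tendsto_intros ypl[folded c_def])
  thus "((\<lambda>K. K - (yp a K)^2) \<longlongrightarrow> 0) (at_right ((cA a)^2/9))" unfolding c_def by (simp add: power_divide)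
  have "((\<lambda>K. 2*pi*pi*(K * sqrt \<bar>1 - (yp a K)^2/K\<bar>)) \<longlongrightarrow> 2*pi*pi*(c^2/9 * sqrt \<bar>1 - (- c/3)^2/(c^2/9)\<bar>)) (at_right (c^2/9))"
    by (intro tendsto_intros ypl[folded c_def]) (use c0 in auto)
  moreover have "(- c/3)^2/(c^2/9) = 1" using c0 by (simp add: power_divide)
  ultimately show "((\<lambda>K. 2*pi*pi*(K * sqrt \<bar>1 - (yp a K)^2/K\<bar>)) \<longlongrightarrow> 0) (at_right ((cA a)^2/9))"
    unfolding c_def by simp
qed

lemma om_value:
  assumes a: "1 \<le> a" "a < sqrt 3"
  shows "1 / (cA a / 3) * ((2*pi / om a) * (cA a / 2)) = 8 * a * pi / (sqrt (3 - a^2) * sqrt (3 * a^2 - 1))"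
proof -
  have a2: "a^2 < 3" by (rule a2_lt[OF a])
  have a1: "a^2 \<ge> 1" using a(1) by (simp add: one_le_power)
  have c0: "cA a > 0" using cA_pos a by auto
  have "alpha a * beta a = (3/(8*a))^2 * ((3 - a^2) * (3 * a^2 - 1))"
    unfolding alpha_eq[OF a(1)] beta_eq[OF a(1)] using a(1) by (simp add: field_simps power2_eq_square)
  hence "om a = sqrt ((3/(8*a))^2) * (sqrt (3 - a^2) * sqrt (3 * a^2 - 1))"
    unfolding om_def by (simp add: real_sqrt_mult)
  also have "sqrt ((3/(8*a))^2) = 3/(8*a)" using a(1) by simp
  finally have om: "om a = 3/(8*a) * (sqrt (3 - a^2) * sqrt (3 * a^2 - 1))" .
  have p: "sqrt (3 - a^2) * sqrt (3 * a^2 - 1) > 0" using a1 a2 by simp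
  show ?thesis unfolding om using c0 p a(1) by (simp add: field_simps)
qed

theorem mainTheorem8:
  fixes a :: real and M :: "real \<Rightarrow> real \<Rightarrow> real^3" and T :: "real \<Rightarrow> real"
  assumes "1 \<le> a" and "a \<le> sqrt 3"
    and "\<And>K. K > (cA a)^2 / 9 \<Longrightarrow> periodic_sol_on a K (M K) (T K)"
  shows "(a < sqrt 3 \<longrightarrow>
            ((\<lambda>K. berry_phase a K (M K) (T K))
               \<longlongrightarrow> 8 * a * pi / (sqrt (3 - a^2) * sqrt (3 * a^2 - 1)))
            (at_right ((cA a)^2 / 9)))
       \<and> (a = sqrt 3 \<longrightarrow>
            filterlim (\<lambda>K. berry_phase a K (M K) (T K)) at_top (at_right ((cA a)^2 / 9)))"
proof -
  note a = assms(1,2)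
  note per = assms(3)
  define c where "c = cA a"
  define F where "F = at_right ((cA a)^2 / 9)"
  have c0: "c > 0" unfolding c_def using cA_pos a by auto
  note LB = lim_basic[OF a, folded F_def]
  have evK: "eventually (\<lambda>K. K > (cA a)^2/9) F" unfolding F_def by (rule eventually_at_right_less)
  have evyp: "eventually (\<lambda>K. yp a K < 0) F"
    using order_tendstoD(2)[OF LB(1), of 0] c0 unfolding c_def by simp
  have evboth: "eventually (\<lambda>K. K > (cA a)^2/9 \<and> yp a K \<le> 0) F"
    using evK evyp by eventually_elim auto
  have sqK_pos: "eventually (\<lambda>K. 1 / sqrt K > 0) F"
    using evK by eventually_elim (smt (verit) zero_le_power2 divide_nonneg_pos real_sqrt_gt_zero zero_less_divide_1_iff)
  have Fnb: "F \<noteq> bot" unfolding F_def by simp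
  show ?thesis
  proof (intro conjI impI)
    assume a3: "a < sqrt 3"
    define fl where "fl = (\<lambda>K. 1 / sqrt K * ((2*pi / hiL a K) * (c/2)))"
    define fu where "fu = (\<lambda>K. 1 / sqrt K * ((2*pi / om a) * (3/2 * yp a K + c)) + 2*pi*pi*(K * sqrt \<bar>1 - (yp a K)^2/K\<bar>))"
    have om0: "om a > 0" using lam_facts[OF a(1) a3] by simp
    have low: "eventually (\<lambda>K. fl K \<le> berry_phase a K (M K) (T K)) F"
      using evboth sqK_pos
    proof eventually_elim
      case (elim K)
      have P: "periodic_sol_on a K (M K) (T K)" using per elim by auto
      have T0: "T K > 0" using P unfolding periodic_sol_on_def by auto
      have h: "2*pi \<le> T K * hiL a K" by (rule case_lt(2)[OF P a(1) a3]) (use elim in auto)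
      hence hp: "hiL a K > 0" using T0 by (smt (verit) mult_nonpos_nonneg pi_gt_zero mult_le_0_iff)
      hence "2*pi / hiL a K \<le> T K" using h by (simp add: divide_le_eq)
      hence "(2*pi / hiL a K) * (c/2) \<le> T K * (c/2)" using c0 by (intro mult_right_mono) auto
      hence "fl K \<le> 1 / sqrt K * (T K * (c/2))" unfolding fl_def using elim by (intro mult_left_mono) auto
      also have "\<dots> \<le> berry_phase a K (M K) (T K)"
        using berry_common(1)[OF P a(1)] elim unfolding c_def by auto
      finally show ?case .
    qed
    have upp: "eventually (\<lambda>K. berry_phase a K (M K) (T K) \<le> fu K) F"
      using evboth sqK_pos
    proof eventually_elim
      case (elim K)
      have P: "periodic_sol_on a K (M K) (T K)" using per elim by auto
      have h: "T K \<le> 2*pi / om a" by (rule case_lt(1)[OF P a(1) a3]) (use elim in auto)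
      have nn: "3/2 * yp a K + c \<ge> 0" using berry_common(3)[OF P a(1)] elim unfolding c_def by auto
      have "T K * (3/2 * yp a K + c) \<le> (2*pi / om a) * (3/2 * yp a K + c)"
        using h nn by (rule mult_right_mono)
      hence "1 / sqrt K * (T K * (3/2 * yp a K + c)) \<le> 1 / sqrt K * ((2*pi / om a) * (3/2 * yp a K + c))"
        using elim by (intro mult_left_mono) auto
      moreover have "berry_phase a K (M K) (T K) \<le> 1 / sqrt K * (T K * (3/2 * yp a K + c)) + 2*pi*pi*(K * sqrt \<bar>1 - (yp a K)^2/K\<bar>)"
        using berry_common(2)[OF P a(1)] elim unfolding c_def by auto
      ultimately show ?case unfolding fu_def by linarith
    qed
    define L where "L = 8 * a * pi / (sqrt (3 - a^2) * sqrt (3 * a^2 - 1))"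
    have Lv: "1 / (c/3) * ((2*pi / om a) * (c/2)) = L" unfolding L_def c_def by (rule om_value[OF a(1) a3])
    have hiLl: "((\<lambda>K. hiL a K) \<longlongrightarrow> om a + 0 * (a^2 / lamL a + lamL a) / 3) F"
      unfolding hiL_def by (intro tendsto_intros LB(3)) simp_all
    have "(fl \<longlongrightarrow> 1 / (c/3) * ((2*pi / (om a + 0 * (a^2 / lamL a + lamL a) / 3)) * (c/2))) F"
      unfolding fl_def using LB(2) hiLl om0 c0 unfolding c_def by (intro tendsto_intros) auto
    hence fll: "(fl \<longlongrightarrow> L) F" using Lv by simp
    have "(fu \<longlongrightarrow> 1 / (c/3) * ((2*pi / om a) * (3/2 * (- c/3) + c)) + 0) F"
      unfolding fu_def using LB(1,2,4) om0 c0 unfolding c_def by (intro tendsto_intros) auto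
    moreover have "1 / (c/3) * ((2*pi / om a) * (3/2 * (- c/3) + c)) + 0 = L"
      using Lv by (simp add: field_simps)
    ultimately have ful: "(fu \<longlongrightarrow> L) F" by simp
    have "((\<lambda>K. berry_phase a K (M K) (T K)) \<longlongrightarrow> L) F"
      by (rule tendsto_sandwich[OF low upp fll ful])
    thus "((\<lambda>K. berry_phase a K (M K) (T K)) \<longlongrightarrow> 8 * a * pi / (sqrt (3 - a^2) * sqrt (3 * a^2 - 1)))
            (at_right ((cA a)^2 / 9))" unfolding L_def F_def .
  next
    assume a3: "a = sqrt 3"
    define g where "g = (\<lambda>K. (pi * c / sqrt K) * inverse (hiE a K))"
    have hiEl: "((\<lambda>K. hiE a K) \<longlongrightarrow> sqrt 0 * (alpha a + 1 + 0/3)) F"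
      unfolding hiE_def by (intro tendsto_intros LB(3)) simp_all
    hence hiEl0: "((\<lambda>K. hiE a K) \<longlongrightarrow> 0) F" by simp
    have evh: "eventually (\<lambda>K. hiE a K > 0) F"
      using evboth
    proof eventually_elim
      case (elim K)
      have P: "periodic_sol_on a K (M K) (T K)" using per elim by auto
      show ?case by (rule case_eq(2)[OF P a3]) (use elim in auto)
    qed
    have inv: "filterlim (\<lambda>K. inverse (hiE a K)) at_top F" by (rule filterlim_inverse_at_top[OF hiEl0 evh])
    have "((\<lambda>K. pi * c / sqrt K) \<longlongrightarrow> pi * c / (c/3)) F"
      using LB(2) c0 unfolding c_def by (intro tendsto_intros) auto
    moreover have "pi * c / (c/3) > 0" using c0 by simp
    ultimately have gl: "filterlim g at_top F" unfolding g_def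
      by (rule filterlim_tendsto_pos_mult_at_top[OF _ _ inv])
    have "eventually (\<lambda>K. g K \<le> berry_phase a K (M K) (T K)) F"
      using evboth sqK_pos
    proof eventually_elim
      case (elim K)
      have P: "periodic_sol_on a K (M K) (T K)" using per elim by auto
      have h: "2*pi \<le> T K * hiE a K" by (rule case_eq(1)[OF P a3]) (use elim in auto)
      have hp: "hiE a K > 0" by (rule case_eq(2)[OF P a3]) (use elim in auto)
      hence "2*pi / hiE a K \<le> T K" using h by (simp add: divide_le_eq)
      hence "(2*pi / hiE a K) * (c/2) \<le> T K * (c/2)" using c0 by (intro mult_right_mono) auto
      hence "1 / sqrt K * ((2*pi / hiE a K) * (c/2)) \<le> 1 / sqrt K * (T K * (c/2))"
        using elim by (intro mult_left_mono) auto
      also have "\<dots> \<le> berry_phase a K (M K) (T K)"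
        using berry_common(1)[OF P] a elim unfolding c_def by auto
      also have "1 / sqrt K * ((2*pi / hiE a K) * (c/2)) = g K" unfolding g_def
        by (simp add: field_simps)
      finally show ?case .
    qed
    hence "filterlim (\<lambda>K. berry_phase a K (M K) (T K)) at_top F"
      by (rule filterlim_at_top_mono[OF gl])
    thus "filterlim (\<lambda>K. berry_phase a K (M K) (T K)) at_top (at_right ((cA a)^2 / 9))"
      unfolding F_def .
  qed
qed

end
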